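(* For integers $n\ge1$, $\alpha\ge0$ and $a\ne b$, define $$T_n(a,b,\alpha)=\int_{[0,\infty)^n}\prod_{i=1}^n(a-y_i)(b-y_i)^{\alpha}e^{-y_i}y_i^2\,\Delta_n^2(\mathbf{y})\,dy_1\cdots dy_n.$$ Then $$T_n(a,b,\alpha)=\frac{(-1)^{n+\alpha(n+\alpha)}\widetilde{\mathcal{K}}_{n,\alpha}}{(b-a)^{\alpha}}\det\Big[L^{(2)}_{n+i-1}(a)\;\;\;L^{(j)}_{n+i+1-j}(b)\Big]_{\substack{i=1,\dots,\alpha+1\\ j=2,\dots,\alpha+1}},\qquad \widetilde{\mathcal{K}}_{n,\alpha}=\frac{\prod_{j=1}^{\alpha+1}(n+j-1)!\,\prod_{j=0}^{n-1}(j+1)!\,(j+2)!}{\prod_{j=0}^{\alpha-1}j!}.$$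
   Context: $\Delta_n(\mathbf{y})=\prod_{1\le i<k\le n}(y_k-y_i)$. $L^{(\rho)}_M(z)=\frac{(\rho+1)_M}{M!}\sum_{j=0}^M\frac{(-M)_j}{(\rho+1)_j}\frac{z^j}{j!}$ is the generalized Laguerre polynomial. Empty products equal $1$. $\det[A_i\;\;B_{i,j}]_{i=1,\dots,\alpha+1;\,j=2,\dots,\alpha+1}$ denotes the determinant of the $(\alpha+1)\times(\alpha+1)$ matrix with first column $(A_i)$ and $j$-th column $(B_{i,j})$ for $j=2,\dots,\alpha+1$. *)

theory Defs
  imports "HOL-Analysis.Analysis"
begin

text \<open>Generalized Laguerre polynomial L^{(rho)}_M(z), with integer degree M;
  by the standard convention L_M = 0 for M < 0.\<close>
definition laguerre :: "real \<Rightarrow> int \<Rightarrow> real \<Rightarrow> real" where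
  "laguerre \<rho> M z = (if M < 0 then 0 else
     pochhammer (\<rho> + 1) (nat M) / fact (nat M) *
     (\<Sum>j = 0..nat M. pochhammer (- real (nat M)) j / pochhammer (\<rho> + 1) j * z ^ j / fact j))"

definition vandermonde :: "nat \<Rightarrow> (nat \<Rightarrow> real) \<Rightarrow> real" where
  "vandermonde n y = (\<Prod>i<n. \<Prod>k\<in>{i<..<n}. (y k - y i))"

definition det_fun :: "nat \<Rightarrow> (nat \<Rightarrow> nat \<Rightarrow> real) \<Rightarrow> real" where
  "det_fun m A = (\<Sum>p | p permutes {..<m}. of_int (sign p) * (\<Prod>i<m. A i (p i)))"

definition T_int :: "nat \<Rightarrow> real \<Rightarrow> real \<Rightarrow> nat \<Rightarrow> real" where
  "T_int n a b \<alpha> = set_lebesgue_integral (Pi\<^sub>M {..<n} (\<lambda>_. lborel)) (Pi\<^sub>E {..<n} (\<lambda>_. {0..}))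
     (\<lambda>y. (\<Prod>i<n. (a - y i) * (b - y i) ^ \<alpha> * exp (- y i) * (y i)\<^sup>2) * (vandermonde n y)\<^sup>2)"

definition K_tilde :: "nat \<Rightarrow> nat \<Rightarrow> real" where
  "K_tilde n \<alpha> = (\<Prod>j = 1..\<alpha>+1. fact (n + j - 1)) * (\<Prod>j<n. fact (j + 1) * fact (j + 2))
     / (\<Prod>j<\<alpha>. fact j)"

end

theory Submission imports Defs "HOL-Probability.Probability" "Jordan_Normal_Form.Determinant" begin


definition lagc :: "nat \<Rightarrow> nat \<Rightarrow> nat \<Rightarrow> real" where
  "lagc \<rho> k j = (if j \<le> k then (-1)^j * fact (k+\<rho>) / (fact (k-j) * fact (\<rho>+j) * fact j) else 0)"

definition lagp :: "nat \<Rightarrow> nat \<Rightarrow> real poly" where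
  "lagp \<rho> k = (\<Sum>j\<le>k. monom (lagc \<rho> k j) j)"

lemma coeff_lagp: "coeff (lagp \<rho> k) i = lagc \<rho> k i"
  unfolding lagp_def coeff_sum by (auto simp: coeff_monom lagc_def)

lemma poch_nat_plus1: "pochhammer (real r + 1) m = fact (r + m) / fact r"
proof -
  have "pochhammer (real r + 1) m = pochhammer (of_nat (Suc r)) m" by (simp add: add.commute)
  also have "\<dots> = of_nat (pochhammer (Suc r) m)" by (rule pochhammer_of_nat)
  also have "(pochhammer (Suc r) m :: nat) = fact (r + m) div fact r"
  proof -
    have "(fact (r + m) :: nat) = fact r * pochhammer (Suc r) m"
      using pochhammer_product'[of "1::nat" r m] by (simp add: pochhammer_fact add.commute)
    then show ?thesis by simp
  qed
  also have "real (fact (r + m) div fact r) = fact (r+m) / fact r"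
    by (subst real_of_nat_div) (auto simp: fact_dvd)
  finally show ?thesis .
qed

lemma poch_neg_nat: "j \<le> M \<Longrightarrow> pochhammer (- real M) j = (-1)^j * fact M / fact (M - j)"
proof -
  assume j: "j \<le> M"
  have "pochhammer (- real M) j = (-1)^j * pochhammer (real M - real j + 1) j"
    by (simp add: pochhammer_minus)
  also have "real M - real j + 1 = real (M - j) + 1" using j by simp
  also have "pochhammer (real (M - j) + 1) j = fact M / fact (M - j)"
    using poch_nat_plus1[of "M-j" j] j by simp
  finally show ?thesis by simp
qed

lemma poly_lagp: "poly (lagp \<rho> k) z = laguerre (real \<rho>) (int k) z"
proof -
  have "laguerre (real \<rho>) (int k) z = pochhammer (real \<rho> + 1) k / fact k *
     (\<Sum>j = 0..k. pochhammer (- real k) j / pochhammer (real \<rho> + 1) j * z ^ j / fact j)"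
    by (simp add: laguerre_def)
  also have "\<dots> = (\<Sum>j = 0..k. lagc \<rho> k j * z ^ j)"
    unfolding sum_distrib_left
  proof (rule sum.cong)
    fix j assume "j \<in> {0..k}" then have j: "j \<le> k" by simp
    have a: "fact (\<rho>+k) \<noteq> (0::real)" "fact k \<noteq> (0::real)" "fact \<rho> \<noteq> (0::real)"
      "fact (\<rho>+j) \<noteq> (0::real)" "fact (k-j) \<noteq> (0::real)" "fact j \<noteq> (0::real)" by auto
    show "pochhammer (real \<rho> + 1) k / fact k *
        (pochhammer (- real k) j / pochhammer (real \<rho> + 1) j * z ^ j / fact j) = lagc \<rho> k j * z ^ j"
      unfolding poch_nat_plus1 poch_neg_nat[OF j] lagc_def using j a
      by (simp add: field_simps add.commute)
  qed simp
  also have "\<dots> = poly (lagp \<rho> k) z"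
    unfolding lagp_def poly_sum by (simp add: poly_monom atMost_atLeast0)
  finally show ?thesis by simp
qed

lemma pderiv_lagp_Suc: "pderiv (lagp \<rho> (Suc k)) = - lagp (Suc \<rho>) k"
proof (rule poly_eqI)
  fix i
  show "coeff (pderiv (lagp \<rho> (Suc k))) i = coeff (- lagp (Suc \<rho>) k) i"
  proof (cases "i \<le> k")
    case True
    have a: "fact (Suc k - Suc i) = (fact (k - i) :: real)" by simp
    have b: "fact (\<rho> + Suc i) = (fact (Suc \<rho> + i) :: real)" by simp
    have c: "fact (Suc i) = (real (Suc i)) * (fact i :: real)" by simp
    have d: "fact (Suc k + \<rho>) = (fact (k + Suc \<rho>) :: real)" by simp
    have gen: "x * ((-1)^(Suc i) * A / (B * C * (x * D))) = - ((-1)^i * A / (B*C*D))"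
      if "x \<noteq> 0" for x A B C D :: real using that by (simp add: field_simps)
    show ?thesis using True unfolding coeff_pderiv coeff_minus coeff_lagp lagc_def
      apply (simp only: a b c d if_True Suc_le_mono)
      apply (rule gen) by simp
  next
    case False then show ?thesis unfolding coeff_pderiv coeff_minus coeff_lagp lagc_def by simp
  qed
qed

lemma pderiv_lagp_0: "pderiv (lagp \<rho> 0) = 0"
  by (simp add: lagp_def pderiv_monom)

lemma higher_pderiv_lagp:
  "(pderiv ^^ r) (lagp \<rho> k) = (if r \<le> k then Polynomial.smult ((-1)^r) (lagp (\<rho> + r) (k - r)) else 0)"
proof (induction r arbitrary: \<rho> k)
  case 0 then show ?case by simp
next
  case (Suc r)
  show ?case
  proof (cases k)
    case 0
    then show ?thesis by (simp del: funpow.simps add: funpow_Suc_right pderiv_lagp_0)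
  next
    case (Suc k')
    have "(pderiv ^^ Suc r) (lagp \<rho> k) = (pderiv ^^ r) (- lagp (Suc \<rho>) k')"
      by (simp del: funpow.simps add: funpow_Suc_right Suc pderiv_lagp_Suc)
    also have "\<dots> = Polynomial.smult (-1) ((pderiv ^^ r) (lagp (Suc \<rho>) k'))"
      by (metis higher_pderiv_smult smult_1_left smult_minus_left)
    finally show ?thesis using Suc by (simp add: Suc.IH)
  qed
qed

lemma degree_lagp: "degree (lagp \<rho> k) \<le> k"
  by (rule degree_le, simp add: coeff_lagp lagc_def)



definition lp :: "nat \<Rightarrow> real poly" where
  "lp k = Polynomial.smult ((-1)^k * fact k) (lagp 2 k)"

definition hh :: "nat \<Rightarrow> real" where "hh k = fact k * fact (k + 2)"

lemma hh_pos: "hh k > 0" by (simp add: hh_def)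

lemma coeff_lp: "coeff (lp k) j = (if j \<le> k then (-1)^k * fact k * ((-1)^j * fact (k+2) / (fact (k-j) * fact (2+j) * fact j)) else 0)"
  by (simp add: lp_def coeff_lagp lagc_def)

lemma coeff_lp_top: "coeff (lp k) k = 1"
  unfolding coeff_lp by (simp add: add.commute flip: power_add)

lemma degree_lp: "degree (lp k) = k"
proof (rule antisym)
  show "degree (lp k) \<le> k" by (rule degree_le, simp add: coeff_lp)
  show "k \<le> degree (lp k)" by (rule le_degree, simp add: coeff_lp_top)
qed

definition Lmom :: "real poly \<Rightarrow> real" where
  "Lmom P = (\<Sum>i\<le>degree P. coeff P i * fact (i + 2))"

lemma Lmom_le: assumes "degree P \<le> K" shows "Lmom P = (\<Sum>i\<le>K. coeff P i * fact (i + 2))"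
  unfolding Lmom_def
  by (rule sum.mono_neutral_left) (use assms in \<open>auto simp: coeff_eq_0\<close>)

lemma Lmom_add: "Lmom (P + Q) = Lmom P + Lmom Q"
proof -
  let ?K = "max (degree P) (degree Q)"
  have "degree (P + Q) \<le> ?K" by (rule degree_add_le) auto
  then show ?thesis
    by (simp add: Lmom_le[of _ ?K] sum.distrib algebra_simps)
qed

lemma Lmom_smult: "Lmom (Polynomial.smult c P) = c * Lmom P"
  by (simp add: Lmom_le[of "Polynomial.smult c P" "degree P"] Lmom_def sum_distrib_left mult.assoc)

lemma Lmom_0: "Lmom 0 = 0" by (simp add: Lmom_def)

lemma Lmom_sum: "Lmom (\<Sum>k\<in>A. f k) = (\<Sum>k\<in>A. Lmom (f k))"
  by (induction A rule: infinite_finite_induct) (auto simp: Lmom_0 Lmom_add)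

lemma binom_diff_sum:
  fixes f :: "nat \<Rightarrow> real"
  shows "(\<Sum>j\<le>Suc k. (-1)^j * real (Suc k choose j) * f j) =
         (\<Sum>j\<le>k. (-1)^j * real (k choose j) * (f j - f (Suc j)))"
proof -
  have A: "(\<Sum>j\<le>Suc k. (-1)^j * real (Suc k choose j) * f j) =
     f 0 + (\<Sum>j\<le>k. (-1)^(Suc j) * real (k choose j) * f (Suc j)) +
        (\<Sum>j\<le>k. (-1)^(Suc j) * real (k choose Suc j) * f (Suc j))"
    apply (subst sum.atMost_Suc_shift)
    apply (simp add: sum.distrib[symmetric])
    apply (rule sum.cong; simp add: algebra_simps)
    done
  have B: "(\<Sum>j\<le>k. (-1)^(Suc j) * real (k choose Suc j) * f (Suc j)) =
      (\<Sum>j\<le>Suc k. (-1)^j * real (k choose j) * f j) - f 0"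
    by (subst sum.atMost_Suc_shift) simp
  have C: "(\<Sum>j\<le>Suc k. (-1)^j * real (k choose j) * f j) = (\<Sum>j\<le>k. (-1)^j * real (k choose j) * f j)"
    by simp
  show ?thesis unfolding A B C by (simp add: sum_subtractf algebra_simps sum.distrib sum_negf)
qed

lemma alt_binom_poch:
  "m \<le> k \<Longrightarrow> (\<Sum>j\<le>k. (-1)^j * real (k choose j) * pochhammer (real j + c) m) =
     (if m = k then (-1)^k * fact k else 0)"
proof (induction k arbitrary: m c)
  case 0 then show ?case by simp
next
  case (Suc k)
  have "(\<Sum>j\<le>Suc k. (-1)^j * real (Suc k choose j) * pochhammer (real j + c) m) =
     (\<Sum>j\<le>k. (-1)^j * real (k choose j) * (pochhammer (real j + c) m - pochhammer (real (Suc j) + c) m))"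
    by (rule binom_diff_sum)
  also have "\<dots> = (if m = Suc k then (-1)^(Suc k) * fact (Suc k) else 0)"
  proof (cases m)
    case 0 then show ?thesis by simp
  next
    case (Suc m')
    have d: "pochhammer (real j + c) m - pochhammer (real (Suc j) + c) m =
        - real m * pochhammer (real j + (c + 1)) m'" for j
    proof -
      have 1: "pochhammer (real j + c) (Suc m') = (real j + c) * pochhammer (real j + (c + 1)) m'"
        by (simp add: pochhammer_rec algebra_simps)
      have 2: "pochhammer (real (Suc j) + c) (Suc m') = (real j + (c+1) + real m') * pochhammer (real j + (c + 1)) m'"
        by (simp add: pochhammer_rec' algebra_simps)
      show ?thesis unfolding Suc 1 2 by (simp add: algebra_simps)
    qed
    have "(\<Sum>j\<le>k. (-1)^j * real (k choose j) * (pochhammer (real j + c) m - pochhammer (real (Suc j) + c) m))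
        = - real m * (\<Sum>j\<le>k. (-1)^j * real (k choose j) * pochhammer (real j + (c + 1)) m')"
      unfolding d sum_distrib_left by (rule sum.cong) auto
    also have "\<dots> = - real m * (if m' = k then (-1)^k * fact k else 0)"
      using Suc.IH[of m' "c+1"] Suc.prems Suc by simp
    also have "\<dots> = (if m = Suc k then (-1)^(Suc k) * fact (Suc k) else 0)"
      using Suc by (simp add: algebra_simps)
    finally show ?thesis .
  qed
  finally show ?case .
qed

lemma shift_sum_monom:
  fixes h :: "nat \<Rightarrow> real"
  shows "(\<Sum>i\<le>m+k. (if i < m then 0 else h (i - m))) = (\<Sum>j\<le>k. h j)"
proof -
  have eq: "{..m+k} = {..<m} \<union> {m..m+k}" by auto
  have "(\<Sum>i\<le>m+k. (if i < m then 0 else h (i - m))) = (\<Sum>i\<in>{..<m}. (if i < m then 0 else h (i - m)))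
     + (\<Sum>i\<in>{m..m+k}. (if i < m then 0 else h (i - m)))"
    unfolding eq by (rule sum.union_disjoint) auto
  then have "(\<Sum>i\<le>m+k. (if i < m then 0 else h (i - m))) = (\<Sum>i\<in>{m..m+k}. (if i < m then 0 else h (i - m)))"
    by simp
  also have "\<dots> = (\<Sum>i\<in>{m..m+k}. h (i - m))" by (rule sum.cong) auto
  also have "\<dots> = (\<Sum>i\<in>{0..k}. h i)"
    using sum.shift_bounds_cl_nat_ivl[of "\<lambda>i. h (i - m)" 0 m k] by (simp add: add.commute)
  finally show ?thesis by (simp add: atMost_atLeast0)
qed

lemma Lmom_monom_lp:
  assumes "m \<le> k"
  shows "Lmom (monom 1 m * lp k) = (if m = k then hh k else 0)"
proof -
  have deg: "degree (monom 1 m * lp k) \<le> m + k"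
    using degree_mult_le[of "monom (1::real) m" "lp k"] degree_monom_le[of "1::real" m] degree_lp[of k]
    by linarith
  have "Lmom (monom 1 m * lp k) = (\<Sum>i\<le>m+k. (if i < m then 0 else coeff (lp k) (i - m) * fact (i - m + m + 2)))"
    unfolding Lmom_le[OF deg] coeff_monom_mult by (rule sum.cong) auto
  also have "\<dots> = (\<Sum>j\<le>k. coeff (lp k) j * fact (j + m + 2))"
    by (rule shift_sum_monom)
  also have "\<dots> = (\<Sum>j\<le>k. (-1)^k * fact (k+2) * ((-1)^j * real (k choose j) * pochhammer (real j + 3) m))"
  proof (rule sum.cong)
    fix j assume "j \<in> {..k}" then have j: "j \<le> k" by simp
    have p: "pochhammer (real j + 3) m = fact (j + m + 2) / fact (j + 2)"
      using poch_nat_plus1[of "j+2" m] by (simp add: add.commute add.left_commute)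
    have "coeff (lp k) j * fact (j + m + 2) =
        (-1)^k * fact k * ((-1)^j * fact (k+2) / (fact (k-j) * fact (2+j) * fact j)) * fact (j + m + 2)"
      using j by (simp add: coeff_lp)
    also have "\<dots> = (-1)^k * fact (k+2) * ((-1)^j * (fact k / (fact j * fact (k - j))) * (fact (j + m + 2) / fact (j + 2)))"
      by (simp add: field_simps add.commute)
    finally show "coeff (lp k) j * fact (j + m + 2) = (-1)^k * fact (k+2) * ((-1)^j * real (k choose j) * pochhammer (real j + 3) m)"
      using j by (simp add: p binomial_fact)
  qed simp
  also have "\<dots> = (-1)^k * fact (k+2) * (\<Sum>j\<le>k. (-1)^j * real (k choose j) * pochhammer (real j + 3) m)"
    by (simp add: sum_distrib_left)
  also have "\<dots> = (if m = k then hh k else 0)"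
    using alt_binom_poch[OF assms, of 3] by (simp add: hh_def flip: power_add)
  finally show ?thesis .
qed

lemma Lmom_orth:
  assumes "degree P \<le> k"
  shows "Lmom (P * lp k) = coeff P k * hh k"
proof -
  have "P * lp k = (\<Sum>i\<le>k. monom (coeff P i) i) * lp k"
    using poly_as_sum_of_monoms'[OF assms] by simp
  also have "\<dots> = (\<Sum>i\<le>k. Polynomial.smult (coeff P i) (monom 1 i * lp k))"
    by (simp add: sum_distrib_right mult_smult_left[symmetric] smult_monom del: mult_smult_left)
  finally have "Lmom (P * lp k) = (\<Sum>i\<le>k. coeff P i * Lmom (monom 1 i * lp k))"
    by (simp add: Lmom_sum Lmom_smult)
  also have "\<dots> = (\<Sum>i\<le>k. if i = k then coeff P k * hh k else 0)"
    by (rule sum.cong) (auto simp: Lmom_monom_lp)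
  finally show ?thesis by simp
qed

lemma Lmom_lp_lp: "Lmom (lp i * lp j) = (if i = j then hh j else 0)"
proof (cases "i \<le> j")
  case True
  then have "Lmom (lp i * lp j) = coeff (lp i) j * hh j"
    by (intro Lmom_orth) (simp add: degree_lp)
  then show ?thesis using True by (auto simp: coeff_lp_top coeff_eq_0 degree_lp)
next
  case False
  then have "Lmom (lp j * lp i) = coeff (lp j) i * hh i"
    by (intro Lmom_orth) (simp add: degree_lp)
  then show ?thesis using False by (auto simp: coeff_eq_0 degree_lp mult.commute)
qed

lemma monic_expand:
  fixes B :: "nat \<Rightarrow> real poly"
  assumes dB: "\<And>i. degree (B i) = i" and cB: "\<And>i. coeff (B i) i = 1"
  shows "degree P \<le> d \<Longrightarrow> \<exists>e. P = (\<Sum>i\<le>d. Polynomial.smult (e i) (B i)) \<and> e d = coeff P d"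
proof (induction d arbitrary: P)
  case 0
  have B0: "B 0 = 1" using dB[of 0] cB[of 0] degree_0_id[of "B 0"] by (simp add: one_pCons)
  from 0 have "P = [:coeff P 0:]" using degree_0_id[of P] by simp
  then show ?case by (intro exI[of _ "\<lambda>_. coeff P 0"]) (simp add: B0)
next
  case (Suc d)
  define c where "c = coeff P (Suc d)"
  define P' where "P' = P - Polynomial.smult c (B (Suc d))"
  have "degree P' \<le> d"
  proof (rule degree_le, intro allI impI)
    fix i assume i: "d < i"
    show "coeff P' i = 0"
    proof (cases "i = Suc d")
      case True then show ?thesis by (simp add: P'_def c_def cB)
    next
      case False
      then have "Suc d < i" using i by simp
      then show ?thesis using Suc.prems dB[of "Suc d"] by (simp add: P'_def coeff_eq_0)
    qed
  qed
  from Suc.IH[OF this] obtain e where e: "P' = (\<Sum>i\<le>d. Polynomial.smult (e i) (B i))" by blast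
  let ?e = "e(Suc d := c)"
  have "(\<Sum>i\<le>Suc d. Polynomial.smult (?e i) (B i)) = (\<Sum>i\<le>d. Polynomial.smult (e i) (B i)) + Polynomial.smult c (B (Suc d))"
    by (simp add: sum.atMost_Suc)
  also have "\<dots> = P" by (simp add: e[symmetric] P'_def)
  finally show ?case by (intro exI[of _ ?e]) (simp add: c_def)
qed

lemma lp_expand:
  assumes "degree P \<le> d"
  shows "P = (\<Sum>k\<le>d. Polynomial.smult (Lmom (P * lp k) / hh k) (lp k))"
proof -
  obtain e where e: "P = (\<Sum>i\<le>d. Polynomial.smult (e i) (lp i))"
    using monic_expand[of lp P d] assms degree_lp coeff_lp_top by blast
  have "Lmom (P * lp m) = e m * hh m" if "m \<le> d" for m
  proof -
    have "Lmom (P * lp m) = (\<Sum>i\<le>d. e i * Lmom (lp i * lp m))"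
      by (subst e) (simp add: sum_distrib_right Lmom_sum Lmom_smult)
    also have "\<dots> = (\<Sum>i\<le>d. if i = m then e m * hh m else 0)"
      by (rule sum.cong) (auto simp: Lmom_lp_lp)
    finally show ?thesis using that by simp
  qed
  then have "e m = Lmom (P * lp m) / hh m" if "m \<le> d" for m
    using hh_pos[of m] that by (simp add: field_simps)
  then show ?thesis by (subst e) (auto intro!: sum.cong)
qed



definition qp :: "real \<Rightarrow> real \<Rightarrow> nat \<Rightarrow> real poly" where
  "qp a b \<alpha> = [:a, -1:] * [:b, -1:] ^ \<alpha>"

lemma poly_qp: "poly (qp a b \<alpha>) y = (a - y) * (b - y) ^ \<alpha>"
  by (simp add: qp_def poly_power algebra_simps)

lemma degree_qp: "degree (qp a b \<alpha>) = Suc \<alpha>"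
  unfolding qp_def by (subst degree_mult_eq) (auto simp: degree_power_eq)

lemma lead_qp: "coeff (qp a b \<alpha>) (Suc \<alpha>) = (-1) ^ Suc \<alpha>"
proof -
  have "coeff (qp a b \<alpha>) (Suc \<alpha>) = lead_coeff (qp a b \<alpha>)" by (simp add: degree_qp)
  also have "\<dots> = (-1) ^ Suc \<alpha>" unfolding qp_def lead_coeff_mult lead_coeff_power by simp
  finally show ?thesis .
qed

lemma qp_ne0: "qp a b \<alpha> \<noteq> 0" using degree_qp by (metis degree_0 nat.simps(3))

lemma lp_ne0: "lp k \<noteq> 0" using coeff_lp_top[of k] by auto

lemma degree_qlp: "degree (qp a b \<alpha> * lp j) = j + Suc \<alpha>"
  by (subst degree_mult_eq) (auto simp: qp_ne0 lp_ne0 degree_qp degree_lp)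

definition cc :: "real \<Rightarrow> real \<Rightarrow> nat \<Rightarrow> nat \<Rightarrow> nat \<Rightarrow> real" where
  "cc a b \<alpha> j k = Lmom (qp a b \<alpha> * lp j * lp k) / hh k"

lemma cc_zero: assumes "j + Suc \<alpha> < k" shows "cc a b \<alpha> j k = 0"
proof -
  have "Lmom (qp a b \<alpha> * lp j * lp k) = coeff (qp a b \<alpha> * lp j) k * hh k"
    by (rule Lmom_orth) (use assms degree_qlp in simp)
  also have "coeff (qp a b \<alpha> * lp j) k = 0" by (rule coeff_eq_0) (use assms degree_qlp in simp)
  finally show ?thesis by (simp add: cc_def)
qed

lemma cc_top: "cc a b \<alpha> j (j + Suc \<alpha>) = (-1) ^ Suc \<alpha>"
proof -
  have "Lmom (qp a b \<alpha> * lp j * lp (j + Suc \<alpha>)) = coeff (qp a b \<alpha> * lp j) (j + Suc \<alpha>) * hh (j + Suc \<alpha>)"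
    by (rule Lmom_orth) (use degree_qlp in simp)
  also have "coeff (qp a b \<alpha> * lp j) (j + Suc \<alpha>) = lead_coeff (qp a b \<alpha> * lp j)"
    by (simp add: degree_qlp)
  also have "\<dots> = (-1) ^ Suc \<alpha>" unfolding lead_coeff_mult
    using lead_qp[of a b \<alpha>] coeff_lp_top[of j] by (simp add: degree_qp degree_lp)
  finally show ?thesis using hh_pos[of "j + Suc \<alpha>"] by (simp add: cc_def)
qed

lemma qlp_expand_N:
  assumes "j + Suc \<alpha> < N"
  shows "qp a b \<alpha> * lp j = (\<Sum>k<N. Polynomial.smult (cc a b \<alpha> j k) (lp k))"
proof -
  have "qp a b \<alpha> * lp j = (\<Sum>k\<le>j + Suc \<alpha>. Polynomial.smult (cc a b \<alpha> j k) (lp k))"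
    unfolding cc_def by (rule lp_expand) (simp add: degree_qlp)
  also have "\<dots> = (\<Sum>k<N. Polynomial.smult (cc a b \<alpha> j k) (lp k))"
    by (rule sum.mono_neutral_left) (use assms in \<open>auto simp: cc_zero\<close>)
  finally show ?thesis .
qed

lemma vanish_deriv:
  "r < m \<Longrightarrow> poly ((pderiv ^^ r) ([:-b, 1:] ^ m * Q)) (b::real) = 0"
proof (induction r arbitrary: m Q)
  case 0
  have "poly ([:-b, 1:] ^ m * Q) b = (poly [:-b, 1:] b) ^ m * poly Q b" by (simp add: poly_power)
  moreover have "poly [:-b, 1:] b = 0" by simp
  ultimately show ?case using 0 by (simp add: zero_power)
next
  case (Suc r)
  then obtain m' where m: "m = Suc m'" by (cases m) auto
  have "pderiv ([:-b, 1:] ^ m * Q) = [:-b, 1:] ^ m' * ([:-b, 1:] * pderiv Q + Polynomial.smult (of_nat m) Q)"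
    unfolding pderiv_mult m pderiv_power_Suc by (simp add: pderiv_pCons algebra_simps)
  then have "(pderiv ^^ Suc r) ([:-b, 1:] ^ m * Q) = (pderiv ^^ r) ([:-b, 1:] ^ m' * ([:-b, 1:] * pderiv Q + Polynomial.smult (of_nat m) Q))"
    by (simp del: funpow.simps add: funpow_Suc_right)
  then show ?case using Suc.IH[of m'] Suc.prems m by simp
qed

definition Vf :: "real \<Rightarrow> real \<Rightarrow> real poly \<Rightarrow> nat \<Rightarrow> real" where
  "Vf a b P m = (if m = 0 then poly P a else poly ((pderiv ^^ (m - 1)) P) b)"

lemma Vf_sum: "Vf a b (\<Sum>k\<in>A. Polynomial.smult (c k) (P k)) m = (\<Sum>k\<in>A. c k * Vf a b (P k) m)"
  by (simp add: Vf_def poly_sum higher_pderiv_sum higher_pderiv_smult)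

lemma Vf_qp: assumes "m \<le> \<alpha>" shows "Vf a b (qp a b \<alpha> * P) m = 0"
proof (cases "m = 0")
  case True then show ?thesis by (simp add: Vf_def poly_qp)
next
  case False
  have "qp a b \<alpha> * P = [:-b, 1:] ^ \<alpha> * Polynomial.smult ((-1)^\<alpha>) ([:a, -1:] * P)"
  proof -
    have e: "[:b, -1:] = Polynomial.smult (-1) [:-b, 1:]" by simp
    then have "[:b, -1:] ^ \<alpha> = Polynomial.smult ((-1)^\<alpha>) ([:-b, 1:] ^ \<alpha>)" by (metis smult_power)
    then show ?thesis by (simp add: qp_def algebra_simps)
  qed
  moreover have "poly ((pderiv ^^ (m - 1)) ([:-b, 1:] ^ \<alpha> * Polynomial.smult ((-1)^\<alpha>) ([:a, -1:] * P))) b = 0"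
    by (rule vanish_deriv) (use False assms in simp)
  ultimately show ?thesis using False by (simp only: Vf_def if_False)
qed

lemma kernel:
  assumes "j + Suc \<alpha> < N" "m \<le> \<alpha>"
  shows "(\<Sum>k<N. cc a b \<alpha> j k * Vf a b (lp k) m) = 0"
  using Vf_qp[OF assms(2), of a b "lp j"] unfolding qlp_expand_N[OF assms(1)] Vf_sum .

lemma Vf_lp: "Vf a b (lp k) m = (-1)^k * fact k *
   (if m = 0 then laguerre 2 (int k) a else (-1)^(m-1) * laguerre (real (m + 1)) (int k + 1 - int m) b)"
proof (cases "m = 0")
  case True then show ?thesis by (simp add: Vf_def lp_def poly_lagp)
next
  case False
  then obtain r where m: "m = Suc r" by (cases m) auto
  show ?thesis
  proof (cases "r \<le> k")
    case True
    have "int k + 1 - int m = int (k - r)" using True m by simp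
    then show ?thesis using True m
      by (simp add: Vf_def lp_def higher_pderiv_smult higher_pderiv_lagp poly_lagp add.commute)
  next
    case False
    have "int k + 1 - int m < 0" using False m by simp
    then show ?thesis using False m
      by (simp add: Vf_def lp_def higher_pderiv_smult higher_pderiv_lagp laguerre_def)
  qed
qed



lemma det_fun_det: "det_fun m A = det (mat m m (\<lambda>(i,j). A i j))"
  unfolding det_fun_def det_def
  by (simp add: lessThan_atLeast0)

lemma mult_entry:
  assumes "A \<in> carrier_mat nr N" "B \<in> carrier_mat N nc" "i < nr" "j < nc"
  shows "(A * B) $$ (i,j) = (\<Sum>k<N. A $$ (i,k) * B $$ (k,j))"
  using assms by (simp add: scalar_prod_def lessThan_atLeast0)

lemma cc_top': "cc a b \<alpha> i (Suc (i + \<alpha>)) = - ((-1) ^ \<alpha>)"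
  using cc_top[of a b \<alpha> i] by simp

definition Cm where "Cm a b \<alpha> n = mat n n (\<lambda>(i,j). cc a b \<alpha> i j)"
definition Bm where "Bm a b \<alpha> n = mat (n + Suc \<alpha>) (n + Suc \<alpha>)
   (\<lambda>(i,k). if i < n then cc a b \<alpha> i k else (if k = i - n then 1 else 0))"
definition Qm where "Qm a b \<alpha> n = mat (n + Suc \<alpha>) (n + Suc \<alpha>)
   (\<lambda>(k,j). if j < n then (if k = j then 1 else 0) else Vf a b (lp k) (j - n))"
definition Vtop where "Vtop a b \<alpha> = mat (Suc \<alpha>) (Suc \<alpha>) (\<lambda>(k,m). Vf a b (lp k) m)"
definition Vbot where "Vbot a b \<alpha> n = mat (Suc \<alpha>) (Suc \<alpha>) (\<lambda>(i,m). Vf a b (lp (n + i)) m)"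

lemma BQ: "Bm a b \<alpha> n * Qm a b \<alpha> n = four_block_mat (Cm a b \<alpha> n) (0\<^sub>m n (Suc \<alpha>))
    (mat (Suc \<alpha>) n (\<lambda>(i,j). if i = j then 1 else 0)) (Vtop a b \<alpha>)"
  (is "?L = ?R")
proof (rule eq_matI)
  show "dim_row ?L = dim_row ?R" "dim_col ?L = dim_col ?R"
    by (simp_all add: Bm_def Qm_def Cm_def Vtop_def)
  fix i j assume i: "i < dim_row ?R" and j: "j < dim_col ?R"
  then have i': "i < n + Suc \<alpha>" and j': "j < n + Suc \<alpha>" by (simp_all add: Cm_def Vtop_def)
  have L: "?L $$ (i,j) = (\<Sum>k<n + Suc \<alpha>. Bm a b \<alpha> n $$ (i,k) * Qm a b \<alpha> n $$ (k,j))"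
    by (rule mult_entry[OF _ _ i' j']) (auto simp: Bm_def Qm_def)
  show "?L $$ (i,j) = ?R $$ (i,j)"
  proof (cases "i < n")
    case True
    note iT = True
    show ?thesis
    proof (cases "j < n")
      case True
      have "?L $$ (i,j) = (\<Sum>k<n + Suc \<alpha>. if k = j then cc a b \<alpha> i j else 0)"
        unfolding L by (rule sum.cong) (use iT True j' in \<open>auto simp: Bm_def Qm_def\<close>)
      also have "\<dots> = cc a b \<alpha> i j" using j' by simp
      finally show ?thesis using iT True by (simp add: Cm_def Vtop_def)
    next
      case False
      have "?L $$ (i,j) = (\<Sum>k<n + Suc \<alpha>. cc a b \<alpha> i k * Vf a b (lp k) (j - n))"
        unfolding L by (rule sum.cong) (use iT False j' in \<open>auto simp: Bm_def Qm_def\<close>)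
      also have "\<dots> = 0" by (rule kernel) (use iT False j' in auto)
      finally show ?thesis using iT False j' by (simp add: Cm_def Vtop_def)
    qed
  next
    case False
    note iF = False
    show ?thesis
    proof (cases "j < n")
      case True
      have "?L $$ (i,j) = (\<Sum>k<n + Suc \<alpha>. if k = i - n then (if i - n = j then 1 else 0) else 0)"
        unfolding L by (rule sum.cong) (use iF True i' j' in \<open>auto simp: Bm_def Qm_def\<close>)
      also have "\<dots> = (if i - n = j then 1 else 0)" using i' j' by simp
      finally show ?thesis using iF True i' by (simp add: Cm_def Vtop_def)
    next
      case False
      have "?L $$ (i,j) = (\<Sum>k<n + Suc \<alpha>. if k = i - n then Vf a b (lp (i - n)) (j - n) else 0)"
        unfolding L by (rule sum.cong) (use iF False i' j' in \<open>auto simp: Bm_def Qm_def\<close>)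
      also have "\<dots> = Vf a b (lp (i - n)) (j - n)"
      proof -
        have "i - n \<in> {..<n + Suc \<alpha>}" using i' by auto
        then show ?thesis by simp
      qed
      finally show ?thesis using iF False i' j' by (simp add: Cm_def Vtop_def)
    qed
  qed
qed

lemma det_Qm: "det (Qm a b \<alpha> n) = det (Vbot a b \<alpha> n)"
proof -
  have "Qm a b \<alpha> n = four_block_mat (1\<^sub>m n) (mat n (Suc \<alpha>) (\<lambda>(k,m). Vf a b (lp k) m))
        (0\<^sub>m (Suc \<alpha>) n) (Vbot a b \<alpha> n)"
    by (rule eq_matI) (auto simp: Qm_def Vbot_def)
  then show ?thesis
    by (simp add: det_four_block_mat_lower_left_zero[of _ n _ "Suc \<alpha>"] Vbot_def)
qed

lemma det_Bm: "det (Bm a b \<alpha> n) = 1"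
proof -
  let ?M = "Suc \<alpha>"
  have car: "Bm a b \<alpha> n \<in> carrier_mat (n + ?M) (n + ?M)" by (simp add: Bm_def)
  define Cb where "Cb = mat n n (\<lambda>(i,j). cc a b \<alpha> i (j + ?M))"
  have "det (Bm a b \<alpha> n) = (-1)^(n * ?M) * det (mat (n + ?M) (n + ?M) (\<lambda> (i,j).
     Bm a b \<alpha> n $$ (i,(if j < n then j + ?M else j - n))))"
    by (rule det_swap_cols[OF car])
  also have "mat (n + ?M) (n + ?M) (\<lambda> (i,j). Bm a b \<alpha> n $$ (i,(if j < n then j + ?M else j - n)))
     = four_block_mat Cb (mat n ?M (\<lambda>(i,j). cc a b \<alpha> i j)) (0\<^sub>m ?M n) (1\<^sub>m ?M)"
    by (rule eq_matI) (auto simp: Bm_def Cb_def)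
  also have "det \<dots> = det Cb * det (1\<^sub>m ?M :: real mat)"
    by (rule det_four_block_mat_lower_left_zero[of Cb n _ ?M]) (auto simp: Cb_def)
  also have "det Cb = prod_list (diag_mat Cb)"
    by (rule det_lower_triangular[of n]) (auto simp: Cb_def cc_zero)
  also have "diag_mat Cb = replicate n ((-1) ^ ?M)"
    by (rule nth_equalityI) (auto simp: diag_mat_def Cb_def cc_top')
  moreover have "(- ((- 1::real) ^ \<alpha>)) ^ n * (- 1) ^ (n + \<alpha> * n) = 1"
  proof -
    have e: "(- ((- 1::real) ^ \<alpha>)) = (-1) ^ Suc \<alpha>" by simp
    have "(- ((- 1::real) ^ \<alpha>)) ^ n = ((-1) ^ Suc \<alpha>) ^ n" by (simp only: e)
    also have "\<dots> = (-1) ^ (Suc \<alpha> * n)" by (simp only: power_mult)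
    also have "Suc \<alpha> * n = n + \<alpha> * n" by simp
    finally have "(- ((- 1::real) ^ \<alpha>)) ^ n = (-1) ^ (n + \<alpha> * n)" .
    moreover have "((-1::real) ^ (n + \<alpha> * n)) * (-1) ^ (n + \<alpha> * n) = 1"
      by (simp flip: power_add)
    ultimately show ?thesis by simp
  qed
  ultimately show ?thesis by (simp add: mult.commute)
qed

lemma key_det: "det (Cm a b \<alpha> n) * det (Vtop a b \<alpha>) = det (Vbot a b \<alpha> n)"
proof -
  have "det (Bm a b \<alpha> n * Qm a b \<alpha> n) = det (Bm a b \<alpha> n) * det (Qm a b \<alpha> n)"
    by (rule det_mult[of _ "n + Suc \<alpha>"]) (auto simp: Bm_def Qm_def)
  also have "\<dots> = det (Vbot a b \<alpha> n)" by (simp add: det_Bm det_Qm)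
  finally have "det (Bm a b \<alpha> n * Qm a b \<alpha> n) = det (Vbot a b \<alpha> n)" .
  moreover have "det (Bm a b \<alpha> n * Qm a b \<alpha> n) = det (Cm a b \<alpha> n) * det (Vtop a b \<alpha>)"
    unfolding BQ by (rule det_four_block_mat_upper_right_zero) (auto simp: Cm_def Vtop_def)
  ultimately show ?thesis by simp
qed



lemma higher_pderiv_top:
  assumes "degree P \<le> r"
  shows "(pderiv ^^ r) P = [: fact r * coeff P r :]"
proof (rule poly_eqI)
  fix i
  show "coeff ((pderiv ^^ r) P) i = coeff [: fact r * coeff P r :] i"
  proof (cases i)
    case 0 then show ?thesis by (simp add: coeff_higher_pderiv pochhammer_fact)
  next
    case (Suc i')
    then have "coeff P (i + r) = 0" using assms by (intro coeff_eq_0) auto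
    then show ?thesis using Suc by (simp add: coeff_higher_pderiv)
  qed
qed

definition Pb :: "real \<Rightarrow> nat \<Rightarrow> real poly" where "Pb b i = [:-b, 1:] ^ i"

lemma degree_Pb: "degree (Pb b i) = i" by (simp add: Pb_def degree_power_eq)
lemma coeff_Pb_top: "coeff (Pb b i) i = 1"
  using lead_coeff_power[of "[:-b, 1:]" i] by (simp add: Pb_def degree_power_eq)

lemma Vf_Pb: "Vf a b (Pb b i) m = (if m = 0 then (a - b) ^ i else if i = m - 1 then fact (m - 1) else 0)"
proof (cases "m = 0")
  case True then show ?thesis by (simp add: Vf_def Pb_def poly_power)
next
  case False
  show ?thesis
  proof (cases "m - 1 < i")
    case True
    have "poly ((pderiv ^^ (m - 1)) ([:-b, 1:] ^ i * 1)) b = 0" by (rule vanish_deriv) (use True in simp)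
    then show ?thesis using False True by (simp add: Vf_def Pb_def)
  next
    case nt: False
    have "(pderiv ^^ (m - 1)) (Pb b i) = [: fact (m - 1) * coeff (Pb b i) (m - 1) :]"
      by (rule higher_pderiv_top) (use nt in \<open>simp add: degree_Pb\<close>)
    moreover have "coeff (Pb b i) (m - 1) = (if i = m - 1 then 1 else 0)"
      using nt coeff_Pb_top[of b i] by (auto intro!: coeff_eq_0 simp: degree_Pb)
    ultimately show ?thesis using False by (simp add: Vf_def)
  qed
qed

lemma prod_list_map_upt: "prod_list (map f [0..<n]) = (\<Prod>i<n. f i)"
  by (induction n) auto

lemma det_Vtop: "det (Vtop a b \<alpha>) = (\<Prod>r<\<alpha>. fact r) * (b - a) ^ \<alpha>"
proof -
  let ?M = "Suc \<alpha>"
  have "\<forall>k. \<exists>e. lp k = (\<Sum>i\<le>k. Polynomial.smult (e i) (Pb b i)) \<and> e k = coeff (lp k) k"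
    using monic_expand[of "Pb b", OF degree_Pb coeff_Pb_top] degree_lp by auto
  then obtain E where E: "\<And>k. lp k = (\<Sum>i\<le>k. Polynomial.smult (E k i) (Pb b i))" "\<And>k. E k k = 1"
    using coeff_lp_top by metis
  define D where "D = mat ?M ?M (\<lambda>(k,i). if i \<le> k then E k i else 0)"
  define W where "W = mat ?M ?M (\<lambda>(i,m). Vf a b (Pb b i) m)"
  have VDW: "Vtop a b \<alpha> = D * W"
  proof (rule eq_matI)
    fix k m assume "k < dim_row (D * W)" "m < dim_col (D * W)"
    then have k: "k < ?M" and m: "m < ?M" by (simp_all add: D_def W_def)
    have "(D * W) $$ (k, m) = (\<Sum>i<?M. D $$ (k,i) * W $$ (i,m))"
      by (rule mult_entry[OF _ _ k m]) (auto simp: D_def W_def)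
    also have "\<dots> = (\<Sum>i\<le>k. E k i * Vf a b (Pb b i) m)"
      using k m by (intro sum.mono_neutral_cong_right) (auto simp: D_def W_def)
    also have "\<dots> = Vf a b (lp k) m"
      using Vf_sum[of a b "E k" "Pb b" "{..k}" m] E(1)[of k] by simp
    finally show "Vtop a b \<alpha> $$ (k, m) = (D * W) $$ (k, m)" using k m by (simp add: Vtop_def)
  qed (auto simp: Vtop_def D_def W_def)
  have dD: "det D = 1"
  proof -
    have "det D = prod_list (diag_mat D)" by (rule det_lower_triangular[of ?M]) (auto simp: D_def)
    also have "diag_mat D = replicate ?M 1" by (rule nth_equalityI) (auto simp: diag_mat_def D_def E(2) nth_Cons' simp del: upt_Suc)
    finally show ?thesis by simp
  qed
  have Wc: "W \<in> carrier_mat (\<alpha> + 1) (\<alpha> + 1)" by (simp add: W_def)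
  have "det W = (-1) ^ (\<alpha> * 1) * det (mat (\<alpha> + 1) (\<alpha> + 1) (\<lambda>(i,j). W $$ (i, if j < \<alpha> then j + 1 else j - \<alpha>)))"
    by (rule det_swap_cols[OF Wc])
  also have "det (mat (\<alpha> + 1) (\<alpha> + 1) (\<lambda>(i,j). W $$ (i, if j < \<alpha> then j + 1 else j - \<alpha>)))
      = prod_list (diag_mat (mat (\<alpha> + 1) (\<alpha> + 1) (\<lambda>(i,j). W $$ (i, if j < \<alpha> then j + 1 else j - \<alpha>))))"
    by (rule det_upper_triangular[of _ "\<alpha> + 1"]) (auto simp: upper_triangular_def W_def Vf_Pb)
  also have "\<dots> = (\<Prod>i<\<alpha> + 1. (if i < \<alpha> then fact i else (a - b) ^ \<alpha>))"
    unfolding diag_mat_def prod_list_map_upt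
  proof (rule prod.cong)
    fix x assume "x \<in> {..<\<alpha> + 1}"
    then have "x < \<alpha> \<or> x = \<alpha>" by auto
    then show "mat (\<alpha> + 1) (\<alpha> + 1) (\<lambda>(i,j). W $$ (i, if j < \<alpha> then j + 1 else j - \<alpha>)) $$ (x, x) =
       (if x < \<alpha> then fact x else (a - b) ^ \<alpha>)"
      by (auto simp: W_def Vf_Pb)
  qed (simp add: diag_mat_def)
  also have "\<dots> = (\<Prod>r<\<alpha>. fact r) * (a - b) ^ \<alpha>"
  proof -
    have "(\<Prod>i<\<alpha> + 1. (if i < \<alpha> then fact i else (a - b) ^ \<alpha>)) =
       (\<Prod>i<\<alpha>. (if i < \<alpha> then fact i else (a - b) ^ \<alpha>)) * (a - b) ^ \<alpha>"
      by simp
    also have "(\<Prod>i<\<alpha>. (if i < \<alpha> then fact i else (a - b) ^ \<alpha>)) = (\<Prod>i<\<alpha>. fact i)"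
      by (rule prod.cong) auto
    finally show ?thesis .
  qed
  finally have "det W = (-1) ^ \<alpha> * ((\<Prod>r<\<alpha>. fact r) * (a - b) ^ \<alpha>)" by simp
  also have "\<dots> = (\<Prod>r<\<alpha>. fact r) * (b - a) ^ \<alpha>"
    by (simp add: power_mult_distrib[symmetric])
  finally have dW: "det W = (\<Prod>r<\<alpha>. fact r) * (b - a) ^ \<alpha>" .
  have "det (Vtop a b \<alpha>) = det D * det W"
    unfolding VDW by (rule det_mult[of _ ?M]) (auto simp: D_def W_def)
  then show ?thesis using dD dW by simp
qed

lemma det_fun_scale:
  "det_fun m (\<lambda>i j. r i * s j * A i j) = (\<Prod>i<m. r i) * (\<Prod>j<m. s j) * det_fun m A"
proof -
  have "(\<Prod>i<m. r i * s (p i) * A i (p i)) = (\<Prod>i<m. r i) * (\<Prod>j<m. s j) * (\<Prod>i<m. A i (p i))"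
    if p: "p permutes {..<m}" for p
  proof -
    have "(\<Prod>i<m. s (p i)) = (\<Prod>j<m. s j)"
      using prod.permute[OF p, of s] by (simp add: comp_def)
    then show ?thesis by (simp add: prod.distrib)
  qed
  then show ?thesis
    unfolding det_fun_def sum_distrib_left by (intro sum.cong) (auto simp: algebra_simps)
qed

lemma sign_prod: "(\<Prod>i<Suc \<alpha>. (-1::real) ^ (n + i)) * (\<Prod>m<Suc \<alpha>. if m = 0 then 1 else (-1) ^ (m - 1))
   = (-1) ^ (n + \<alpha> * (n + \<alpha>))"
proof (induction \<alpha>)
  case 0
  have "(\<Prod>i<Suc 0. (-1::real) ^ (n + i)) = (-1) ^ n" by simp
  moreover have "(\<Prod>m<Suc 0. if m = 0 then 1 else (-1::real) ^ (m - 1)) = 1" by simp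
  ultimately show ?case by simp
next
  case (Suc \<alpha>)
  have "(\<Prod>i<Suc (Suc \<alpha>). (-1::real) ^ (n + i)) * (\<Prod>m<Suc (Suc \<alpha>). if m = 0 then 1 else (-1) ^ (m - 1))
     = ((\<Prod>i<Suc \<alpha>. (-1::real) ^ (n + i)) * (\<Prod>m<Suc \<alpha>. if m = 0 then 1 else (-1) ^ (m - 1)))
        * ((-1) ^ (n + Suc \<alpha>) * (-1) ^ \<alpha>)"
    by (simp only: prod.lessThan_Suc) simp
  also have "\<dots> = (-1) ^ (n + \<alpha> * (n + \<alpha>) + (n + Suc \<alpha>) + \<alpha>)"
    unfolding Suc.IH by (simp add: power_add)
  also have "(n + \<alpha> * (n + \<alpha>) + (n + Suc \<alpha>) + \<alpha>) = (n + Suc \<alpha> * (n + Suc \<alpha>))"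
    by (simp add: algebra_simps)
  finally show ?case .
qed

lemma fact_prod: "fact n * (\<Prod>j<n. fact j :: real) = (\<Prod>j<n. fact (j + 1))"
  by (induction n) (auto simp: algebra_simps)



lemma vandermonde_Suc: "vandermonde (Suc n) y = vandermonde n y * (\<Prod>i<n. (y n - y i))"
proof -
  have "vandermonde (Suc n) y = (\<Prod>i<n. \<Prod>k\<in>{i<..<Suc n}. (y k - y i)) * (\<Prod>k\<in>{n<..<Suc n}. (y k - y n))"
    unfolding vandermonde_def by simp
  also have "(\<Prod>k\<in>{n<..<Suc n}. (y k - y n)) = 1"
  proof -
    have "{n<..<Suc n} = {}" by auto
    then show ?thesis by simp
  qed
  also have "(\<Prod>i<n. \<Prod>k\<in>{i<..<Suc n}. (y k - y i)) = (\<Prod>i<n. (\<Prod>k\<in>{i<..<n}. (y k - y i)) * (y n - y i))"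
  proof (rule prod.cong)
    fix i assume "i \<in> {..<n}"
    then have "{i<..<Suc n} = insert n {i<..<n}" by auto
    then show "(\<Prod>k\<in>{i<..<Suc n}. (y k - y i)) = (\<Prod>k\<in>{i<..<n}. (y k - y i)) * (y n - y i)"
      by (simp add: mult.commute)
  qed simp
  finally show ?thesis by (simp add: vandermonde_def prod.distrib)
qed

lemma neg_prod: "(-1) ^ m * (\<Prod>i<m. (y i - c)) = (\<Prod>i<m. (c - y i :: real))"
  by (induction m) (auto simp: algebra_simps)

lemma det_vandermonde: "det_fun n (\<lambda>i j. y i ^ j) = vandermonde n y"
proof (induction n)
  case 0 then show ?case by (simp add: det_fun_def vandermonde_def)
next
  case (Suc n)
  define A where "A = mat (Suc n) (Suc n) (\<lambda>(i,j). y i ^ j)"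
  define E where "E = mat (Suc n) (Suc n) (\<lambda>(k,j). if k = j then 1 else if Suc k = j then - y n else 0)"
  define AEm where "AEm = mat (Suc n) (Suc n) (\<lambda>(i,j). if j = 0 then 1 else (y i - y n) * y i ^ (j - 1))"
  have AEeq: "A * E = AEm"
  proof (rule eq_matI)
    fix i j assume "i < dim_row AEm" "j < dim_col AEm"
    then have i: "i < Suc n" and j: "j < Suc n" by (simp_all add: AEm_def)
    have "(A * E) $$ (i,j) = (\<Sum>k<Suc n. A $$ (i,k) * E $$ (k,j))"
      by (rule mult_entry[OF _ _ i j]) (auto simp: A_def E_def)
    also have "\<dots> = (\<Sum>k<Suc n. (if k = j then y i ^ k else 0) + (if Suc k = j then - y n * y i ^ k else 0))"
      by (rule sum.cong) (use i j in \<open>auto simp: A_def E_def\<close>)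
    also have "\<dots> = y i ^ j + (if j = 0 then 0 else - y n * y i ^ (j - 1))"
      using j by (cases j) (auto simp: sum.distrib)
    also have "\<dots> = AEm $$ (i,j)" using i j by (cases j) (auto simp: AEm_def algebra_simps)
    finally show "(A * E) $$ (i,j) = AEm $$ (i,j)" .
  qed (auto simp: A_def E_def AEm_def)
  have dE: "det E = 1"
  proof -
    have "det E = prod_list (diag_mat E)" by (rule det_upper_triangular[of _ "Suc n"]) (auto simp: upper_triangular_def E_def)
    also have "diag_mat E = map (\<lambda>_. 1) [0..<Suc n]" by (auto simp: diag_mat_def E_def)
    finally show ?thesis by (simp add: prod_list_map_upt)
  qed
  have "det AEm = det A" using AEeq det_mult[of A "Suc n" E] dE by (auto simp: A_def E_def)
  have AEc: "AEm \<in> carrier_mat (1 + n) (1 + n)" by (simp add: AEm_def)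
  have "det AEm = (-1) ^ (1 * n) * det (mat (1 + n) (1 + n) (\<lambda>(i,j). AEm $$ ((if i < 1 then i + n else i - 1), j)))"
    by (rule det_swap_rows[OF AEc])
  also have "mat (1 + n) (1 + n) (\<lambda>(i,j). AEm $$ ((if i < 1 then i + n else i - 1), j)) =
     four_block_mat (1\<^sub>m 1) (0\<^sub>m 1 n) (mat n 1 (\<lambda>_. 1)) (mat n n (\<lambda>(i,j). (y i - y n) * y i ^ j))"
    by (rule eq_matI) (auto simp: AEm_def)
  also have "det \<dots> = det (1\<^sub>m 1 :: real mat) * det (mat n n (\<lambda>(i,j). (y i - y n) * y i ^ j))"
    by (rule det_four_block_mat_upper_right_zero) auto
  also have "det (mat n n (\<lambda>(i,j). (y i - y n) * y i ^ j)) = det_fun n (\<lambda>i j. (y i - y n) * 1 * y i ^ j)"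
    by (simp add: det_fun_det)
  also have "\<dots> = (\<Prod>i<n. (y i - y n)) * vandermonde n y"
    unfolding det_fun_scale Suc.IH by simp
  finally have "det A = (-1) ^ n * (\<Prod>i<n. (y i - y n)) * vandermonde n y"
    using \<open>det AEm = det A\<close> by simp
  also have "(-1) ^ n * (\<Prod>i<n. (y i - y n)) = (\<Prod>i<n. (y n - y i))"
    by (rule neg_prod)
  finally show ?case by (simp add: det_fun_det A_def vandermonde_Suc mult.commute)
qed

lemma poly_lp_sum: "j < n \<Longrightarrow> poly (lp j) x = (\<Sum>k<n. coeff (lp j) k * x ^ k)"
  unfolding poly_altdef
  by (rule sum.mono_neutral_left) (auto simp: degree_lp coeff_eq_0)

lemma det_lp: "det_fun n (\<lambda>i j. poly (lp j) (y i)) = vandermonde n y"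
proof -
  define A where "A = mat n n (\<lambda>(i,j). y i ^ j)"
  define U where "U = mat n n (\<lambda>(k,j). coeff (lp j) k)"
  have "mat n n (\<lambda>(i,j). poly (lp j) (y i)) = A * U"
  proof (rule eq_matI)
    fix i j assume "i < dim_row (A * U)" "j < dim_col (A * U)"
    then have i: "i < n" and j: "j < n" by (simp_all add: A_def U_def)
    have "(A * U) $$ (i,j) = (\<Sum>k<n. A $$ (i,k) * U $$ (k,j))"
      by (rule mult_entry[OF _ _ i j]) (auto simp: A_def U_def)
    also have "\<dots> = poly (lp j) (y i)" unfolding poly_lp_sum[OF j]
      by (rule sum.cong) (use i j in \<open>auto simp: A_def U_def\<close>)
    finally show "mat n n (\<lambda>(i,j). poly (lp j) (y i)) $$ (i,j) = (A * U) $$ (i,j)" using i j by simp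
  qed (auto simp: A_def U_def)
  moreover have "det U = 1"
  proof -
    have "det U = prod_list (diag_mat U)" by (rule det_upper_triangular[of _ n])
      (auto simp: upper_triangular_def U_def coeff_eq_0 degree_lp)
    also have "diag_mat U = map (\<lambda>_. 1) [0..<n]" by (auto simp: diag_mat_def U_def coeff_lp_top)
    finally show ?thesis by (simp add: prod_list_map_upt)
  qed
  ultimately have "det (mat n n (\<lambda>(i,j). poly (lp j) (y i))) = det A"
    using det_mult[of A n U] by (auto simp: A_def U_def)
  then show ?thesis by (simp add: det_fun_det A_def flip: det_vandermonde)
qed

lemma andreief:
  "(\<Sum>\<sigma> | \<sigma> permutes {..<n}. \<Sum>\<tau> | \<tau> permutes {..<n}.
      of_int (sign \<sigma>) * of_int (sign \<tau>) * (\<Prod>k<n. F (\<sigma> k) (\<tau> k) :: real)) = fact n * det_fun n F"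
proof -
  have inner: "(\<Sum>\<tau> | \<tau> permutes {..<n}. of_int (sign \<sigma>) * of_int (sign \<tau>) * (\<Prod>k<n. F (\<sigma> k) (\<tau> k)))
      = det_fun n F" if s: "\<sigma> permutes {..<n}" for \<sigma>
  proof -
    have ps: "permutation \<sigma>" by (rule permutes_imp_permutation[OF finite_lessThan s])
    have "(\<Sum>\<tau> | \<tau> permutes {..<n}. of_int (sign \<sigma>) * of_int (sign \<tau>) * (\<Prod>k<n. F (\<sigma> k) (\<tau> k)))
       = (\<Sum>\<rho> | \<rho> permutes {..<n}. of_int (sign \<sigma>) * of_int (sign (\<rho> \<circ> \<sigma>)) * (\<Prod>k<n. F (\<sigma> k) ((\<rho> \<circ> \<sigma>) k)))"
      by (rule sum_permutations_compose_right[OF s])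
    also have "\<dots> = (\<Sum>\<rho> | \<rho> permutes {..<n}. of_int (sign \<rho>) * (\<Prod>i<n. F i (\<rho> i)))"
    proof (rule sum.cong)
      fix \<rho> assume "\<rho> \<in> {\<rho>. \<rho> permutes {..<n}}"
      then have r: "\<rho> permutes {..<n}" by simp
      have "sign (\<rho> \<circ> \<sigma>) = sign \<rho> * sign \<sigma>"
        by (rule sign_compose) (use ps permutes_imp_permutation[OF finite_lessThan r] in auto)
      moreover have "(\<Prod>k<n. F (\<sigma> k) ((\<rho> \<circ> \<sigma>) k)) = (\<Prod>i<n. F i (\<rho> i))"
        using prod.permute[OF s, of "\<lambda>i. F i (\<rho> i)"] by (simp add: comp_def)
      ultimately show "of_int (sign \<sigma>) * of_int (sign (\<rho> \<circ> \<sigma>)) * (\<Prod>k<n. F (\<sigma> k) ((\<rho> \<circ> \<sigma>) k)) =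
          of_int (sign \<rho>) * (\<Prod>i<n. F i (\<rho> i))"
        by (simp add: algebra_simps flip: of_int_mult)
    qed simp
    finally show ?thesis by (simp add: det_fun_def)
  qed
  have "(\<Sum>\<sigma> | \<sigma> permutes {..<n}. \<Sum>\<tau> | \<tau> permutes {..<n}.
      of_int (sign \<sigma>) * of_int (sign \<tau>) * (\<Prod>k<n. F (\<sigma> k) (\<tau> k))) = (\<Sum>\<sigma> | \<sigma> permutes {..<n}. det_fun n F)"
    by (rule sum.cong) (auto simp: inner)
  also have "\<dots> = fact n * det_fun n F" using card_permutations[of "{..<n}" n] by simp
  finally show ?thesis .
qed



lemma pow_exp_integral:
  "has_bochner_integral lborel (\<lambda>t::real. indicator {0..} t * (t ^ k * exp (- t))) (fact k)"
proof (rule has_bochner_integral_nn_integral)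
  show "(\<lambda>t::real. indicator {0..} t * (t ^ k * exp (- t))) \<in> borel_measurable lborel" by simp
  show "AE x in lborel. 0 \<le> indicator {0..} x * ((x::real) ^ k * exp (- x))"
    by (intro AE_I2) (auto simp: indicator_def intro!: mult_nonneg_nonneg)
  show "0 \<le> (fact k :: real)" by simp
  have "(\<integral>\<^sup>+x. ennreal (indicator {0..} x * (x ^ k * exp (- x))) \<partial>lborel) =
        (\<integral>\<^sup>+x. ennreal (x^k * exp (-x)) * indicator {0 ..} x \<partial>lborel)"
    by (rule nn_integral_cong) (auto simp: indicator_def)
  also have "\<dots> = ennreal (fact k)" using nn_intergal_power_times_exp_Ici[of k] by simp
  finally show "(\<integral>\<^sup>+x. ennreal (indicator {0..} x * (x ^ k * exp (- x))) \<partial>lborel) = ennreal (fact k)" .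
qed

lemma poly_integral:
  "has_bochner_integral lborel (\<lambda>t::real. indicator {0..} t * (poly P t * t\<^sup>2 * exp (- t))) (Lmom P)"
proof -
  have eq: "(\<lambda>t::real. indicator {0..} t * (poly P t * t\<^sup>2 * exp (- t))) =
     (\<lambda>t. \<Sum>i\<le>degree P. coeff P i * (indicator {0..} t * (t ^ (i + 2) * exp (- t))))"
  proof
    fix t :: real
    show "indicator {0..} t * (poly P t * t\<^sup>2 * exp (- t)) =
        (\<Sum>i\<le>degree P. coeff P i * (indicator {0..} t * (t ^ (i + 2) * exp (- t))))"
      unfolding poly_altdef sum_distrib_left sum_distrib_right
      by (rule sum.cong) (auto simp: power_add power2_eq_square algebra_simps)
  qed
  have "has_bochner_integral lborel (\<lambda>t. \<Sum>i\<le>degree P. coeff P i * (indicator {0..} t * (t ^ (i + 2) * exp (- t))))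
          (\<Sum>i\<le>degree P. coeff P i * fact (i + 2))"
    by (intro has_bochner_integral_sum has_bochner_integral_mult_right pow_exp_integral)
  then show ?thesis unfolding eq Lmom_def .
qed

lemma ps_lborel: "product_sigma_finite (\<lambda>_::nat. lborel)"
  unfolding product_sigma_finite_def using sigma_finite_lborel by simp

definition hfun where
  "hfun a b \<alpha> i j t = indicator {0..} t * (poly (qp a b \<alpha> * lp i * lp j) t * t\<^sup>2 * exp (- t))"

lemma integrand_eq:
  assumes y: "y \<in> space (Pi\<^sub>M {..<n} (\<lambda>_. lborel))"
  shows "indicator (Pi\<^sub>E {..<n} (\<lambda>_. {0..})) y *
     ((\<Prod>i<n. (a - y i) * (b - y i) ^ \<alpha> * exp (- y i) * (y i)\<^sup>2) * (vandermonde n y)\<^sup>2) =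
    (\<Sum>\<sigma> | \<sigma> permutes {..<n}. \<Sum>\<tau> | \<tau> permutes {..<n}.
      of_int (sign \<sigma>) * of_int (sign \<tau>) * (\<Prod>k<n. hfun a b \<alpha> (\<sigma> k) (\<tau> k) (y k)))"
proof -
  have ind: "indicator (Pi\<^sub>E {..<n} (\<lambda>_. {0..})) y = (\<Prod>k<n. indicator {0..} (y k) :: real)"
  proof (cases "\<forall>k<n. 0 \<le> y k")
    case True
    then have "y \<in> Pi\<^sub>E {..<n} (\<lambda>_. {0..})" using y by (auto simp: space_PiM PiE_def)
    then show ?thesis using True by simp
  next
    case False
    then obtain k where k: "k < n" "\<not> 0 \<le> y k" by auto
    then have "y \<notin> Pi\<^sub>E {..<n} (\<lambda>_. {0..})" by auto
    moreover have "(\<Prod>k<n. indicator {0..} (y k) :: real) = 0"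
      apply (rule prod_zero)
      using k by (auto intro!: bexI[of _ k] simp: indicator_def)
    ultimately show ?thesis by simp
  qed
  define V where "V = (\<lambda>\<sigma>. of_int (sign \<sigma>) * (\<Prod>k<n. poly (lp (\<sigma> k)) (y k)))"
  have vdm: "vandermonde n y = (\<Sum>\<sigma> | \<sigma> permutes {..<n}. V \<sigma>)"
    unfolding det_lp[symmetric] det_fun_def V_def ..
  define W where "W = (\<Prod>k<n. indicator {0..} (y k) * ((a - y k) * (b - y k) ^ \<alpha> * exp (- y k) * (y k)\<^sup>2))"
  have "indicator (Pi\<^sub>E {..<n} (\<lambda>_. {0..})) y *
     ((\<Prod>i<n. (a - y i) * (b - y i) ^ \<alpha> * exp (- y i) * (y i)\<^sup>2) * (vandermonde n y)\<^sup>2) =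
     W * ((\<Sum>\<sigma> | \<sigma> permutes {..<n}. V \<sigma>) * (\<Sum>\<tau> | \<tau> permutes {..<n}. V \<tau>))"
    unfolding ind vdm W_def power2_eq_square[of "sum _ _"] prod.distrib by (simp add: algebra_simps)
  also have "\<dots> = (\<Sum>\<sigma> | \<sigma> permutes {..<n}. \<Sum>\<tau> | \<tau> permutes {..<n}. W * (V \<sigma> * V \<tau>))"
    unfolding sum_product by (simp add: sum_distrib_left)
  also have "\<dots> = (\<Sum>\<sigma> | \<sigma> permutes {..<n}. \<Sum>\<tau> | \<tau> permutes {..<n}.
      of_int (sign \<sigma>) * of_int (sign \<tau>) * (\<Prod>k<n. hfun a b \<alpha> (\<sigma> k) (\<tau> k) (y k)))"
  proof (intro sum.cong refl)
    fix \<sigma> \<tau>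
    have "(\<Prod>k<n. hfun a b \<alpha> (\<sigma> k) (\<tau> k) (y k)) =
        (\<Prod>k<n. indicator {0..} (y k) * ((a - y k) * (b - y k) ^ \<alpha> * exp (- y k) * (y k)\<^sup>2) *
           poly (lp (\<sigma> k)) (y k) * poly (lp (\<tau> k)) (y k))"
      by (rule prod.cong) (auto simp: hfun_def poly_qp algebra_simps)
    also have "\<dots> = W * (\<Prod>k<n. poly (lp (\<sigma> k)) (y k)) * (\<Prod>k<n. poly (lp (\<tau> k)) (y k))"
      unfolding W_def by (simp only: prod.distrib)
    finally show "W * (V \<sigma> * V \<tau>) = of_int (sign \<sigma>) * of_int (sign \<tau>) * (\<Prod>k<n. hfun a b \<alpha> (\<sigma> k) (\<tau> k) (y k))"
      unfolding V_def by (simp add: algebra_simps)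
  qed
  finally show ?thesis .
qed

lemma T_int_eq: "T_int n a b \<alpha> = fact n * det_fun n (\<lambda>i j. Lmom (qp a b \<alpha> * lp i * lp j))"
proof -
  interpret product_sigma_finite "\<lambda>_::nat. lborel" by (rule ps_lborel)
  have hint: "has_bochner_integral lborel (hfun a b \<alpha> i j) (Lmom (qp a b \<alpha> * lp i * lp j))" for i j
    unfolding hfun_def[abs_def] by (rule poly_integral)
  have prodint: "integrable (Pi\<^sub>M {..<n} (\<lambda>_. lborel)) (\<lambda>y. \<Prod>k<n. hfun a b \<alpha> (\<sigma> k) (\<tau> k) (y k))"
    "(\<integral>y. (\<Prod>k<n. hfun a b \<alpha> (\<sigma> k) (\<tau> k) (y k)) \<partial>Pi\<^sub>M {..<n} (\<lambda>_. lborel)) =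
       (\<Prod>k<n. Lmom (qp a b \<alpha> * lp (\<sigma> k) * lp (\<tau> k)))" for \<sigma> \<tau>
  proof -
    show "integrable (Pi\<^sub>M {..<n} (\<lambda>_. lborel)) (\<lambda>y. \<Prod>k<n. hfun a b \<alpha> (\<sigma> k) (\<tau> k) (y k))"
      by (rule product_integrable_prod) (use hint in \<open>auto simp: has_bochner_integral_iff\<close>)
    have "(\<integral>y. (\<Prod>k<n. hfun a b \<alpha> (\<sigma> k) (\<tau> k) (y k)) \<partial>Pi\<^sub>M {..<n} (\<lambda>_. lborel)) =
       (\<Prod>k<n. integral\<^sup>L lborel (hfun a b \<alpha> (\<sigma> k) (\<tau> k)))"
      by (rule product_integral_prod) (use hint in \<open>auto simp: has_bochner_integral_iff\<close>)
    also have "\<dots> = (\<Prod>k<n. Lmom (qp a b \<alpha> * lp (\<sigma> k) * lp (\<tau> k)))"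
      using hint by (simp add: has_bochner_integral_iff)
    finally show "(\<integral>y. (\<Prod>k<n. hfun a b \<alpha> (\<sigma> k) (\<tau> k) (y k)) \<partial>Pi\<^sub>M {..<n} (\<lambda>_. lborel)) =
       (\<Prod>k<n. Lmom (qp a b \<alpha> * lp (\<sigma> k) * lp (\<tau> k)))" .
  qed
  have "T_int n a b \<alpha> = (\<integral>y. (\<Sum>\<sigma> | \<sigma> permutes {..<n}. \<Sum>\<tau> | \<tau> permutes {..<n}.
      of_int (sign \<sigma>) * of_int (sign \<tau>) * (\<Prod>k<n. hfun a b \<alpha> (\<sigma> k) (\<tau> k) (y k))) \<partial>Pi\<^sub>M {..<n} (\<lambda>_. lborel))"
    unfolding T_int_def set_lebesgue_integral_def
    by (rule Bochner_Integration.integral_cong[OF refl]) (simp add: integrand_eq)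
  also have "\<dots> = (\<Sum>\<sigma> | \<sigma> permutes {..<n}. \<Sum>\<tau> | \<tau> permutes {..<n}.
      of_int (sign \<sigma>) * of_int (sign \<tau>) * (\<Prod>k<n. Lmom (qp a b \<alpha> * lp (\<sigma> k) * lp (\<tau> k))))"
    by (simp add: integral_sum integrable_sum prodint)
  also have "\<dots> = fact n * det_fun n (\<lambda>i j. Lmom (qp a b \<alpha> * lp i * lp j))"
    by (rule andreief)
  finally show ?thesis .
qed



theorem mainTheorem10:
  fixes n \<alpha> :: nat and a b :: real
  assumes "n \<ge> 1" and "a \<noteq> b"
  shows "T_int n a b \<alpha> =
    (-1) ^ (n + \<alpha> * (n + \<alpha>)) * K_tilde n \<alpha> / (b - a) ^ \<alpha> *
    det_fun (\<alpha> + 1) (\<lambda>i j. if j = 0 then laguerre 2 (int (n + i)) a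
                           else laguerre (real (j + 1)) (int (n + i) + 1 - int j) b)"
proof -
  define L where "L = (\<lambda>i j. if j = 0 then laguerre 2 (int (n + i)) a
                           else laguerre (real (j + 1)) (int (n + i) + 1 - int j) b)"
  define H where "H = (\<Prod>j<n. hh j)"
  define F where "F = (\<Prod>r<\<alpha>. fact r :: real)"
  define B where "B = (b - a) ^ \<alpha>"
  define Sg where "Sg = (\<Prod>i<Suc \<alpha>. (-1::real) ^ (n + i))"
  define Sm where "Sm = (\<Prod>m<Suc \<alpha>. if m = 0 then 1 else (-1::real) ^ (m - 1))"
  define Pf where "Pf = (\<Prod>i<Suc \<alpha>. fact (n + i) :: real)"
  define D where "D = det_fun (\<alpha> + 1) L"
  have B0: "B \<noteq> 0" using assms(2) by (simp add: B_def)
  have F0: "F \<noteq> 0" by (simp add: F_def)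
  have 1: "T_int n a b \<alpha> = fact n * det_fun n (\<lambda>i j. Lmom (qp a b \<alpha> * lp i * lp j))"
    by (rule T_int_eq)
  have 2: "det_fun n (\<lambda>i j. Lmom (qp a b \<alpha> * lp i * lp j)) = H * det (Cm a b \<alpha> n)"
  proof -
    have "(\<lambda>i j. Lmom (qp a b \<alpha> * lp i * lp j)) = (\<lambda>i j. 1 * hh j * cc a b \<alpha> i j)"
      using hh_pos by (auto simp: cc_def fun_eq_iff less_irrefl)
      (metis hh_pos less_irrefl)
    moreover have "det_fun n (\<lambda>i j. 1 * hh j * cc a b \<alpha> i j) = (\<Prod>i<n. 1) * (\<Prod>j<n. hh j) * det_fun n (cc a b \<alpha>)"
      by (rule det_fun_scale)
    ultimately have "det_fun n (\<lambda>i j. Lmom (qp a b \<alpha> * lp i * lp j)) = H * det_fun n (cc a b \<alpha>)"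
      by (simp add: H_def)
    also have "det_fun n (cc a b \<alpha>) = det (Cm a b \<alpha> n)"
      by (simp add: det_fun_det Cm_def)
    finally show ?thesis .
  qed
  have 3: "det (Vbot a b \<alpha> n) = Sg * Pf * Sm * D"
  proof -
    have "det (Vbot a b \<alpha> n) = det_fun (Suc \<alpha>) (\<lambda>i m. Vf a b (lp (n + i)) m)"
      by (simp add: det_fun_det Vbot_def)
    also have "(\<lambda>i m. Vf a b (lp (n + i)) m) =
       (\<lambda>i m. ((-1)^(n + i) * fact (n + i)) * (if m = 0 then 1 else (-1) ^ (m - 1)) * L i m)"
      by (auto simp: fun_eq_iff Vf_lp L_def)
    also have "det_fun (Suc \<alpha>) \<dots> = (\<Prod>i<Suc \<alpha>. (-1)^(n + i) * fact (n + i)) * Sm * det_fun (Suc \<alpha>) L"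
      unfolding det_fun_scale Sm_def ..
    finally show ?thesis by (simp add: Sg_def Pf_def D_def prod.distrib)
  qed
  have 4: "det (Vtop a b \<alpha>) = F * B" by (simp add: det_Vtop F_def B_def)
  have 5: "det (Cm a b \<alpha> n) = Sg * Pf * Sm * D / (F * B)"
    using key_det[of a b \<alpha> n] 3 4 F0 B0 by (simp add: field_simps)
  have K: "K_tilde n \<alpha> = Pf * (fact n * H) / F"
  proof -
    have "(\<Prod>j = 1..\<alpha>+1. fact (n + j - 1) :: real) = Pf"
      unfolding Pf_def using prod.shift_bounds_cl_Suc_ivl[of "\<lambda>j. fact (n + j - 1) :: real" 0 \<alpha>]
      by (simp add: atLeast0AtMost lessThan_Suc_atMost)
    moreover have "(\<Prod>j<n. fact (j + 1) * fact (j + 2) :: real) = fact n * H"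
      unfolding H_def hh_def prod.distrib fact_prod[symmetric] by (simp add: algebra_simps)
    ultimately show ?thesis by (simp add: K_tilde_def F_def)
  qed
  have sg: "Sg * Sm = (-1) ^ (n + \<alpha> * (n + \<alpha>))" unfolding Sg_def Sm_def by (rule sign_prod)
  have "T_int n a b \<alpha> = fact n * H * (Sg * Pf * Sm * D / (F * B))"
    using 1 2 5 by simp
  also have "\<dots> = (Sg * Sm) * (Pf * (fact n * H) / F) / B * D"
    using F0 B0 by (simp add: field_simps)
  finally show ?thesis unfolding sg K[symmetric] B_def D_def L_def by simp
qed


end
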